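(* Let $K$ be a field of characteristic $0$, let $L=\mathcal{L}(x,y)$ be the free Lie algebra over $K$ freely generated by $x,y$, and let $\delta$ be the derivation of $L$ determined by $\delta(x)=0$, $\delta(y)=x$. Let $k\geq 0$ be an integer and $p\in L$, and put $f=[p,\delta^k(p)]$. Then $f$ is a $K$-linear combination of pseudodeterminants of degree $(k,0)$, i.e. of elements $U^{(k,0)}_{A,B}=[\delta^k(A),B]-[A,\delta^k(B)]$ with $A,B$ Hall monomials.
   Context: For Hall monomials $A,B$ of $L$ (elements of the Hall basis of $L$, built from basic words with respect to the degree-lexicographic order with $x<y$) and integers $m,k\geq 0$, the pseudodeterminant of degree $(m,k)$ is $U^{(m,k)}_{A,B}=[\delta^m(A),\delta^{k}(B)]-[\delta^{k}(A),\delta^m(B)]$. *)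

theory Defs
  imports "HOL-Library.Poly_Mapping"
begin

text \<open>Free associative algebra K<x,y> over the letters x = False, y = True
  (so x < y), realised as finitely supported functions from words to K.\<close>

type_synonym 'a nc = "bool list \<Rightarrow>\<^sub>0 'a"

definition nc_scale :: "'a::ring \<Rightarrow> 'a nc \<Rightarrow> 'a nc" where
  "nc_scale c p = Poly_Mapping.map (\<lambda>a. c * a) p"

definition nc_mult :: "'a::ring nc \<Rightarrow> 'a nc \<Rightarrow> 'a nc" where
  "nc_mult p q = (\<Sum>u\<in>Poly_Mapping.keys p. \<Sum>v\<in>Poly_Mapping.keys q.
      Poly_Mapping.single (u @ v) (Poly_Mapping.lookup p u * Poly_Mapping.lookup q v))"

definition lie :: "'a::ring nc \<Rightarrow> 'a nc \<Rightarrow> 'a nc" where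
  "lie p q = nc_mult p q - nc_mult q p"

inductive_set free_lie :: "'a::ring_1 nc set" where
  gen_x: "Poly_Mapping.single [False] 1 \<in> free_lie"
| gen_y: "Poly_Mapping.single [True] 1 \<in> free_lie"
| add: "p \<in> free_lie \<Longrightarrow> q \<in> free_lie \<Longrightarrow> p + q \<in> free_lie"
| scale: "p \<in> free_lie \<Longrightarrow> nc_scale c p \<in> free_lie"
| bracket: "p \<in> free_lie \<Longrightarrow> q \<in> free_lie \<Longrightarrow> lie p q \<in> free_lie"

text \<open>The derivation delta with delta(x) = 0, delta(y) = x: on a word it replaces
  one occurrence of y by x in all possible ways (Leibniz rule); extended linearly.\<close>
definition delta_word :: "bool list \<Rightarrow> 'a::ring_1 nc" where
  "delta_word w = (\<Sum>i\<in>{i. i < length w \<and> w ! i = True}.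
      Poly_Mapping.single (w[i := False]) 1)"

definition delta :: "'a::ring_1 nc \<Rightarrow> 'a nc" where
  "delta p = (\<Sum>w\<in>Poly_Mapping.keys p. nc_scale (Poly_Mapping.lookup p w) (delta_word w))"

definition lyndon :: "bool list \<Rightarrow> bool" where
  "lyndon w \<longleftrightarrow> w \<noteq> [] \<and>
     (\<forall>i. 0 < i \<and> i < length w \<longrightarrow> (w, drop i w) \<in> lexord {(a, b). a < b})"

definition std_split :: "bool list \<Rightarrow> nat" where
  "std_split w = (LEAST i. 0 < i \<and> i < length w \<and> lyndon (drop i w))"

lemma lyndon_single: "lyndon [a]"
  by (auto simp: lyndon_def)

lemma std_split_bounds:
  assumes "2 \<le> length w"
  shows "0 < std_split w \<and> std_split w < length w"
proof -
  have "lyndon (drop (length w - 1) w)"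
    using assms by (cases w rule: rev_cases) (auto simp: lyndon_single)
  hence ex: "0 < length w - 1 \<and> length w - 1 < length w \<and> lyndon (drop (length w - 1) w)"
    using assms by auto
  show ?thesis unfolding std_split_def using LeastI[of "\<lambda>i. 0 < i \<and> i < length w \<and> lyndon (drop i w)" "length w - 1", OF ex] by blast
qed

function hall_mono :: "bool list \<Rightarrow> 'a::ring_1 nc" where
  "hall_mono w = (if length w \<le> 1 then Poly_Mapping.single w 1
     else lie (hall_mono (take (std_split w) w)) (hall_mono (drop (std_split w) w)))"
  by auto
termination
proof (relation "measure length")
  fix w :: "bool list"
  assume "\<not> length w \<le> 1"
  then have "0 < std_split w \<and> std_split w < length w" by (intro std_split_bounds) simp
  then show "(take (std_split w) w, w) \<in> measure length"
    and "(drop (std_split w) w, w) \<in> measure length" by auto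
qed simp

definition hall_monomials :: "'a::ring_1 nc set" where
  "hall_monomials = {hall_mono w | w. lyndon w}"

definition pseudodet :: "nat \<Rightarrow> nat \<Rightarrow> 'a::ring_1 nc \<Rightarrow> 'a nc \<Rightarrow> 'a nc" where
  "pseudodet m k A B = lie ((delta ^^ m) A) ((delta ^^ k) B) - lie ((delta ^^ k) A) ((delta ^^ m) B)"

end

theory Submission imports Defs "HOL-Library.List_Lexorder" HOL.Modules begin

declare hall_mono.simps[simp del]

instantiation list :: (type) monoid_add
begin
definition zero_list_def: "(0::'a list) = []"
definition plus_list_def: "(xs::'a list) + ys = xs @ ys"
instance by standard (simp_all add: zero_list_def plus_list_def)
end

lemma pm_expand: "p = (\<Sum>u\<in>Poly_Mapping.keys p. Poly_Mapping.single u (Poly_Mapping.lookup p u))"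
  by (rule poly_mapping_eqI) (simp add: lookup_sum lookup_single when_def in_keys_iff)

lemma nc_mult_eq: "nc_mult p q = p * q"
proof -
  have "p * q = (\<Sum>u\<in>Poly_Mapping.keys p. Poly_Mapping.single u (Poly_Mapping.lookup p u)) *
     (\<Sum>v\<in>Poly_Mapping.keys q. Poly_Mapping.single v (Poly_Mapping.lookup q v))"
    using pm_expand[of p] pm_expand[of q] by simp
  also have "\<dots> = nc_mult p q"
    unfolding nc_mult_def sum_product by (simp add: mult_single plus_list_def)
  finally show ?thesis by simp
qed

lemma lie_eq: "lie p q = p * q - q * p"
  by (simp add: lie_def nc_mult_eq)

lemma nc_scale_eq: "nc_scale c p = Poly_Mapping.single [] c * p"
  unfolding nc_scale_def mult_map_scale_conv_mult zero_list_def ..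

lemma single0_central: "Poly_Mapping.single [] (c::'a::comm_ring_1) * p = p * Poly_Mapping.single [] c"
proof -
  have "Poly_Mapping.single [] c * p = Poly_Mapping.single [] c * (\<Sum>u\<in>Poly_Mapping.keys p. Poly_Mapping.single u (Poly_Mapping.lookup p u))"
    using pm_expand[of p] by simp
  also have "\<dots> = (\<Sum>u\<in>Poly_Mapping.keys p. Poly_Mapping.single u (Poly_Mapping.lookup p u)) * Poly_Mapping.single [] c"
    by (simp add: sum_distrib_left sum_distrib_right mult_single plus_list_def mult.commute)
  finally show ?thesis using pm_expand[of p] by simp
qed

interpretation NC: module "nc_scale :: 'a::field \<Rightarrow> 'a nc \<Rightarrow> 'a nc"
proof
  fix a b :: 'a and x y :: "'a nc"
  show "nc_scale a (x + y) = nc_scale a x + nc_scale a y" by (simp add: nc_scale_eq distrib_left)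
  show "nc_scale (a + b) x = nc_scale a x + nc_scale b x" by (simp add: nc_scale_eq single_add distrib_right)
  show "nc_scale a (nc_scale b x) = nc_scale (a * b) x"
    by (simp add: nc_scale_eq mult.assoc[symmetric] mult_single plus_list_def)
  show "nc_scale 1 x = x" by (simp add: nc_scale_eq zero_list_def[symmetric])
qed

lemma lie_add_left: "lie (p + q) r = lie p r + lie q r" by (simp add: lie_eq algebra_simps)
lemma lie_add_right: "lie r (p + q) = lie r p + lie r q" by (simp add: lie_eq algebra_simps)
lemma lie_zero_left[simp]: "lie 0 r = 0" by (simp add: lie_eq)
lemma lie_zero_right[simp]: "lie r 0 = 0" by (simp add: lie_eq)
lemma lie_self[simp]: "lie r r = 0" by (simp add: lie_eq)
lemma lie_antisym: "lie p q = - lie q p" by (simp add: lie_eq)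
lemma lie_diff_left: "lie (p - q) r = lie p r - lie q r" by (simp add: lie_eq algebra_simps)
lemma lie_diff_right: "lie r (p - q) = lie r p - lie r q" by (simp add: lie_eq algebra_simps)
lemma jacobi: "lie (lie a b) c = lie a (lie b c) - lie b (lie a c)" by (simp add: lie_eq algebra_simps)
lemma central_aux: "q * (Poly_Mapping.single [] (c::'a::comm_ring_1) * p) = Poly_Mapping.single [] c * (q * p)"
  by (metis mult.assoc single0_central)
lemma lie_scale_left: "lie (nc_scale (c::'a::comm_ring_1) p) q = nc_scale c (lie p q)"
  by (simp add: lie_eq nc_scale_eq right_diff_distrib mult.assoc central_aux)
lemma lie_scale_right: "lie q (nc_scale (c::'a::comm_ring_1) p) = nc_scale c (lie q p)"
  by (simp add: lie_eq nc_scale_eq right_diff_distrib mult.assoc central_aux)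

lemma lie_sum_left: "lie (\<Sum>i\<in>I. f i) q = (\<Sum>i\<in>I. lie (f i) q)"
  by (induct I rule: infinite_finite_induct) (simp_all add: lie_add_left)
lemma lie_sum_right: "lie q (\<Sum>i\<in>I. f i) = (\<Sum>i\<in>I. lie q (f i))"
  by (induct I rule: infinite_finite_induct) (simp_all add: lie_add_right)

lemma lookup_nc_scale: "Poly_Mapping.lookup (nc_scale c p) w = c * Poly_Mapping.lookup p w"
  by (simp add: nc_scale_def map.rep_eq when_def)

lemma nc_scale_zero[simp]: "nc_scale 0 p = (0::'a::ring nc)" by (simp add: nc_scale_def map_eq_zero_iff)

lemma delta_superset: "finite A \<Longrightarrow> Poly_Mapping.keys p \<subseteq> A \<Longrightarrow>
   delta p = (\<Sum>w\<in>A. nc_scale (Poly_Mapping.lookup p w) (delta_word w))"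
  unfolding delta_def by (rule sum.mono_neutral_left) (auto simp: in_keys_iff)

lemma delta_add: "delta (p + q) = delta p + (delta q :: 'a::field nc)"
proof -
  let ?A = "Poly_Mapping.keys p \<union> Poly_Mapping.keys q"
  have "delta (p + q) = (\<Sum>w\<in>?A. nc_scale (Poly_Mapping.lookup (p+q) w) (delta_word w))"
    using keys_add[of p q] by (intro delta_superset) auto
  also have "\<dots> = (\<Sum>w\<in>?A. nc_scale (Poly_Mapping.lookup p w) (delta_word w)) + (\<Sum>w\<in>?A. nc_scale (Poly_Mapping.lookup q w) (delta_word w))"
    by (simp add: lookup_add NC.scale_left_distrib sum.distrib)
  also have "\<dots> = delta p + delta q"
    by (subst (1 2) delta_superset[where A="?A"]) auto
  finally show ?thesis .
qed

lemma delta_scale: "delta (nc_scale c p) = nc_scale c (delta p :: 'a::field nc)"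
proof -
  have "delta (nc_scale c p) = (\<Sum>w\<in>Poly_Mapping.keys p. nc_scale (Poly_Mapping.lookup (nc_scale c p) w) (delta_word w))"
    by (intro delta_superset) (auto simp: in_keys_iff lookup_nc_scale)
  also have "\<dots> = nc_scale c (delta p)"
    by (simp add: lookup_nc_scale delta_def NC.scale_sum_right)
  finally show ?thesis .
qed

lemma delta_zero[simp]: "delta 0 = 0" by (simp add: delta_def)

lemma deltak_add: "(delta ^^ k) (p + q) = (delta ^^ k) p + ((delta ^^ k) q :: 'a::field nc)"
  by (induct k) (simp_all add: delta_add)
lemma deltak_scale: "(delta ^^ k) (nc_scale c p) = nc_scale c ((delta ^^ k) p :: 'a::field nc)"
  by (induct k) (simp_all add: delta_scale)
lemma deltak_zero: "(delta ^^ k) 0 = 0" by (induct k) simp_all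
lemma deltak_sum: "(delta ^^ k) (\<Sum>i\<in>I. f i) = (\<Sum>i\<in>I. (delta ^^ k) (f i) :: 'a::field nc)"
  by (induct I rule: infinite_finite_induct) (simp_all add: deltak_add deltak_zero)



lemma lyndon_iff: "lyndon w \<longleftrightarrow> w \<noteq> [] \<and> (\<forall>i. 0 < i \<and> i < length w \<longrightarrow> w < drop i w)"
  by (simp add: lyndon_def list_less_def)

lemma less_append_self: "r \<noteq> [] \<Longrightarrow> (xs::'a::linorder list) < xs @ r"
  by (induct xs) (auto simp: neq_Nil_conv)

lemma append_less_append_iff: "((xs::'a::linorder list) @ a < xs @ b) = (a < b)"
  by (induct xs) auto

lemma less_cases: "(xs::'a::linorder list) < ys \<Longrightarrow> (\<exists>r. r \<noteq> [] \<and> ys = xs @ r) \<or> (\<forall>a b. xs @ a < ys @ b)"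
proof (induct xs arbitrary: ys)
  case Nil
  then show ?case by (cases ys) auto
next
  case (Cons x xs)
  then obtain y ys' where ys: "ys = y # ys'" by (cases ys) auto
  show ?case
  proof (cases "x < y")
    case True then show ?thesis using ys by auto
  next
    case False
    then have "x = y" "xs < ys'" using Cons.prems ys by auto
    then show ?thesis using Cons.hyps[of ys'] ys by auto
  qed
qed

lemma lyndon_nonempty: "lyndon w \<Longrightarrow> w \<noteq> []" by (simp add: lyndon_def)

lemma std_right_lyndon:
  assumes "2 \<le> length w" shows "lyndon (drop (std_split w) w)"
proof -
  have "lyndon (drop (length w - 1) w)"
    using assms by (cases w rule: rev_cases) (auto simp: lyndon_single)
  hence ex: "0 < length w - 1 \<and> length w - 1 < length w \<and> lyndon (drop (length w - 1) w)"
    using assms by auto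
  show ?thesis unfolding std_split_def using LeastI[of "\<lambda>i. 0 < i \<and> i < length w \<and> lyndon (drop i w)" "length w - 1", OF ex] by blast
qed

lemma std_least: "0 < j \<Longrightarrow> j < length w \<Longrightarrow> lyndon (drop j w) \<Longrightarrow> std_split w \<le> j"
  unfolding std_split_def by (rule Least_le) simp

lemma std_min:
  assumes "2 \<le> length w" "0 < j" "j < length w"
  shows "drop (std_split w) w \<le> drop j w"
proof -
  define Sf where "Sf = (\<lambda>j. drop j w) ` {j. 0 < j \<and> j < length w}"
  have fin: "finite Sf" unfolding Sf_def by simp
  have ne: "Sf \<noteq> {}" unfolding Sf_def using assms by auto
  define m where "m = Min Sf"
  have "m \<in> Sf" unfolding m_def using fin ne by simp
  then obtain j0 where j0: "0 < j0" "j0 < length w" "m = drop j0 w" unfolding Sf_def by auto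
  have mle: "m \<le> drop j w" if "0 < j" "j < length w" for j
    unfolding m_def using fin that by (intro Min_le) (auto simp: Sf_def)
  have "lyndon m"
    unfolding lyndon_iff
  proof (intro conjI allI impI)
    show "m \<noteq> []" using j0 by simp
    fix i assume i: "0 < i \<and> i < length m"
    have eq: "drop i m = drop (i + j0) w" using j0 by simp
    have "m \<le> drop i m" unfolding eq using i j0 by (intro mle) auto
    moreover have "m \<noteq> drop i m" proof assume "m = drop i m" then have "length m = length (drop i m)" by simp moreover have "0 < i" "i < length m" using i by auto moreover have "length (drop i m) = length m - i" by simp ultimately show False by linarith qed
    ultimately show "m < drop i m" by simp
  qed
  then have le: "std_split w \<le> j0" using j0 by (intro std_least) auto
  have b: "0 < std_split w" "std_split w < length w" using std_split_bounds[OF assms(1)] by auto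
  have lv: "lyndon (drop (std_split w) w)" using std_right_lyndon[OF assms(1)] .
  have "std_split w = j0"
  proof (rule ccontr)
    assume "std_split w \<noteq> j0"
    then have lt: "std_split w < j0" using le by simp
    have "drop (j0 - std_split w) (drop (std_split w) w) = m" using lt j0 by simp
    moreover have "drop (std_split w) w < drop (j0 - std_split w) (drop (std_split w) w)"
    proof -
      have "0 < j0 - std_split w \<and> j0 - std_split w < length (drop (std_split w) w)" using lt j0 by auto
      then show ?thesis using lv unfolding lyndon_iff by blast
    qed
    moreover have "m \<le> drop (std_split w) w" using mle b by simp
    ultimately show False by simp
  qed
  then show ?thesis using mle[OF assms(2,3)] j0 by simp
qed

lemma std_left_lyndon:
  assumes lw: "lyndon w" and len: "2 \<le> length w"
  shows "lyndon (take (std_split w) w)"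
proof -
  define i0 where "i0 = std_split w"
  have b: "0 < i0" "i0 < length w" using std_split_bounds[OF len] by (auto simp: i0_def)
  define u where "u = take i0 w"
  define v where "v = drop i0 w"
  have w: "w = u @ v" by (simp add: u_def v_def)
  have lu: "length u = i0" using b by (simp add: u_def)
  have wl: "w < drop j w" if "0 < j" "j < length w" for j using lw that unfolding lyndon_iff by auto
  have vmin: "v \<le> drop j w" if "0 < j" "j < length w" for j
    unfolding v_def i0_def using std_min[OF len that] .
  show ?thesis
    unfolding i0_def[symmetric] u_def[symmetric] lyndon_iff
  proof (intro conjI allI impI)
    show "u \<noteq> []" using lu b by auto
    fix j assume j: "0 < j \<and> j < length u"
    define u2 where "u2 = drop j u"
    show "u < u2"
    proof (rule ccontr)
      assume "\<not> u < u2"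
      moreover have "u \<noteq> u2" proof assume "u = u2" then have "length u = length (drop j u)" by (simp add: u2_def) moreover have "0 < j" "j < length u" using j by auto moreover have "length (drop j u) = length u - j" by simp ultimately show False by linarith qed
      ultimately have "u2 < u" by simp
      have dj: "drop j w = u2 @ v" using j by (simp add: w u2_def)
      from less_cases[OF \<open>u2 < u\<close>] show False
      proof
        assume "\<exists>r. r \<noteq> [] \<and> u = u2 @ r"
        then obtain r where r: "r \<noteq> []" "u = u2 @ r" by blast
        have "w < drop j w" using wl j lu b by auto
        then have "u2 @ (r @ v) < u2 @ v" using r dj w by simp
        then have "r @ v < v" by (simp add: append_less_append_iff)
        moreover have "drop (length u2) w = r @ v" using r w by simp
        moreover have "0 < length u2" "length u2 < length w"
        proof -
          have "length u2 = length u - j" by (simp add: u2_def)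
          moreover have "length w = length u + length v" using w by simp
          moreover have "v \<noteq> []" using b v_def by simp
          ultimately show "0 < length u2" "length u2 < length w" using j by auto
        qed
        ultimately show False using vmin[of "length u2"] by auto
      next
        assume "\<forall>a b. u2 @ a < u @ b"
        then have "drop j w < w" using dj w by simp
        moreover have "w < drop j w" using wl j lu b by auto
        ultimately show False by simp
      qed
    qed
  qed
qed

lemma take_less: "0 < i \<Longrightarrow> i < length w \<Longrightarrow> take i w < (w::'a::linorder list)"
  using less_append_self[of "drop i w" "take i w"] by simp

lemma lyndon_append:
  assumes lh: "lyndon h" and lk: "lyndon k" and hk: "h < k"
  shows "lyndon (h @ k) \<and> h @ k < k"
proof -
  have hne: "h \<noteq> []" and kne: "k \<noteq> []" using lh lk by (auto simp: lyndon_def)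
  have less: "h @ k < k"
    using less_cases[OF hk]
  proof
    assume "\<exists>r. r \<noteq> [] \<and> k = h @ r"
    then obtain r where r: "r \<noteq> []" "k = h @ r" by blast
    have "k < drop (length h) k" using lk r hne unfolding lyndon_iff by auto
    then have "k < r" using r by simp
    then show ?thesis using r by (simp add: append_less_append_iff)
  next
    assume "\<forall>a b. h @ a < k @ b"
    from this[rule_format, of k "[]"] show ?thesis by simp
  qed
  have "lyndon (h @ k)"
    unfolding lyndon_iff
  proof (intro conjI allI impI)
    show "h @ k \<noteq> []" using hne by simp
    fix i assume i: "0 < i \<and> i < length (h @ k)"
    consider "i < length h" | "i = length h" | "length h < i" by linarith
    then show "h @ k < drop i (h @ k)"
    proof cases
      case 1
      have "h < drop i h" using lh i 1 unfolding lyndon_iff by auto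
      from less_cases[OF this] show ?thesis
      proof
        assume "\<exists>r. r \<noteq> [] \<and> drop i h = h @ r"
        then obtain r where "drop i h = h @ r" by blast
        then have "length (drop i h) \<ge> length h" by simp
        then show ?thesis using i 1 by simp
      next
        assume "\<forall>a b. h @ a < drop i h @ b"
        then show ?thesis using 1 by simp
      qed
    next
      case 2 then show ?thesis using less by simp
    next
      case 3
      have "k < drop (i - length h) k" using lk i 3 unfolding lyndon_iff by auto
      then show ?thesis using 3 less by simp
    qed
  qed
  then show ?thesis using less by simp
qed

lemma not_lyndon_append:
  assumes "s \<noteq> []" "k \<noteq> []" "k \<le> s"
  shows "\<not> lyndon (s @ k)"
proof
  assume l: "lyndon (s @ k)"
  have "s @ k < drop (length s) (s @ k)" using l assms unfolding lyndon_iff by auto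
  then have a: "s @ k < k" by simp
  have "k < s @ k"
  proof (cases "k = s")
    case True then show ?thesis using assms less_append_self by blast
  next
    case False
    then have "k < s" using assms by simp
    from less_cases[OF this] show ?thesis
    proof
      assume "\<exists>r. r \<noteq> [] \<and> s = k @ r"
      then obtain r where r: "r \<noteq> []" "s = k @ r" by blast
      then show ?thesis using less_append_self[of "r @ k" k] by simp
    next
      assume "\<forall>a b. k @ a < s @ b"
      from this[rule_format, of "[]" k] show ?thesis by simp
    qed
  qed
  with a show False by simp
qed

lemma std_append:
  assumes lh: "lyndon h" and lk: "lyndon k" and c: "length h = 1 \<or> k \<le> drop (std_split h) h"
  shows "std_split (h @ k) = length h"
  unfolding std_split_def
proof (rule Least_equality)
  have "h \<noteq> []" "k \<noteq> []" using lh lk by (auto simp: lyndon_def)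
  then show "0 < length h \<and> length h < length (h @ k) \<and> lyndon (drop (length h) (h @ k))"
    using lk by simp
next
  fix i assume i: "0 < i \<and> i < length (h @ k) \<and> lyndon (drop i (h @ k))"
  show "length h \<le> i"
  proof (rule ccontr)
    assume "\<not> length h \<le> i"
    then have il: "i < length h" by simp
    then have len: "2 \<le> length h" using i by linarith
    then have "k \<le> drop (std_split h) h" using c by simp
    also have "\<dots> \<le> drop i h" using std_min[OF len] i il by simp
    finally have "\<not> lyndon (drop i h @ k)"
      using il lk by (intro not_lyndon_append) (auto simp: lyndon_def)
    then show False using i il by simp
  qed
qed

lemma hall_long: "2 \<le> length w \<Longrightarrow>
   hall_mono w = lie (hall_mono (take (std_split w) w)) (hall_mono (drop (std_split w) w))"
  by (subst hall_mono.simps) simp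



definition HS :: "bool list \<Rightarrow> nat \<Rightarrow> 'a::field nc set" where
  "HS k n = NC.span {hall_mono s | s. lyndon s \<and> s < k \<and> length s \<le> n}"

lemma HS_mono: "k \<le> k' \<Longrightarrow> n \<le> n' \<Longrightarrow> HS k n \<subseteq> HS k' n'"
  unfolding HS_def by (rule NC.span_mono) auto

lemma lie_span_right:
  assumes "x \<in> NC.span G" "\<And>g. g \<in> G \<Longrightarrow> lie a g \<in> NC.span H"
  shows "lie a x \<in> NC.span H"
  using assms(1)
proof (induction rule: NC.span_induct_alt)
  case base then show ?case by (simp add: NC.span_zero)
next
  case (step c x y) then show ?case
    by (simp add: lie_add_right lie_scale_right NC.span_add NC.span_scale assms(2))
qed

lemma lie_span_left:
  assumes "x \<in> NC.span G" "\<And>g. g \<in> G \<Longrightarrow> lie g a \<in> NC.span H"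
  shows "lie x a \<in> NC.span H"
  using assms(1)
proof (induction rule: NC.span_induct_alt)
  case base then show ?case by (simp add: NC.span_zero)
next
  case (step c x y) then show ?case
    by (simp add: lie_add_left lie_scale_left NC.span_add NC.span_scale assms(2))
qed

lemma lyndon_len: "lyndon w \<Longrightarrow> 1 \<le> length w" by (cases w) (auto simp: lyndon_def)

lemma finite_short: "finite {w::bool list. length w < n \<and> P w}"
proof -
  have "{w::bool list. length w < n \<and> P w} \<subseteq> {xs. set xs \<subseteq> UNIV \<and> length xs \<le> n}" by auto
  then show ?thesis using finite_lists_length_le[of "UNIV :: bool set" n] finite_subset by auto
qed

lemma main_aux:
  fixes n :: nat
  shows "\<And>m h k. length h + length k = n \<Longrightarrow> card {w::bool list. length w < n \<and> w < k} = m \<Longrightarrow>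
     lyndon h \<Longrightarrow> lyndon k \<Longrightarrow> h < k \<Longrightarrow> lie (hall_mono h) (hall_mono k) \<in> (HS k n :: 'a::field nc set)"
proof (induction n rule: less_induct)
  case (less n)
  note outer = less.IH
  show ?case using less.prems
  proof (induction m arbitrary: h k rule: less_induct)
    case (less m)
    note inner = less.IH
    have lh: "lyndon h" and lk: "lyndon k" and hk: "h < k" and n: "length h + length k = n"
      and m: "card {w::bool list. length w < n \<and> w < k} = m" using less.prems by auto
    have IH1: "lie (hall_mono a) (hall_mono b) \<in> (HS k n :: 'a nc set)"
      if "lyndon a" "lyndon b" "a < b" "b < k" "length a + length b \<le> n" for a b
    proof (cases "length a + length b < n")
      case True
      have "lie (hall_mono a) (hall_mono b) \<in> (HS b (length a + length b) :: 'a nc set)"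
        using outer[OF True refl refl] that by simp
      also have "\<dots> \<subseteq> HS k n" using that True by (intro HS_mono) auto
      finally show ?thesis .
    next
      case False
      then have eq: "length a + length b = n" using that by simp
      have sub: "{w::bool list. length w < n \<and> w < b} \<subset> {w. length w < n \<and> w < k}"
      proof
        show "{w::bool list. length w < n \<and> w < b} \<subseteq> {w. length w < n \<and> w < k}"
          using that by auto
        have "length b < n" using eq lyndon_len[OF that(1)] by simp
        then show "{w::bool list. length w < n \<and> w < b} \<noteq> {w. length w < n \<and> w < k}"
          using that by auto
      qed
      have "card {w::bool list. length w < n \<and> w < b} < m"
        unfolding m[symmetric] by (rule psubset_card_mono[OF finite_short sub])
      then have "lie (hall_mono a) (hall_mono b) \<in> (HS b n :: 'a nc set)"
        using inner[OF _ eq refl] that by simp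
      also have "\<dots> \<subseteq> HS k n" using that by (intro HS_mono) auto
      finally show ?thesis .
    qed
    have IH: "lie (hall_mono a) (hall_mono b) \<in> (HS k n :: 'a nc set)"
      if "lyndon a" "lyndon b" "a < k" "b < k" "length a + length b \<le> n" for a b
    proof -
      consider "a < b" | "a = b" | "b < a" by fastforce
      then show ?thesis
      proof cases
        case 1 then show ?thesis using IH1 that by simp
      next
        case 2 then show ?thesis by (simp add: HS_def NC.span_zero)
      next
        case 3
        then have "lie (hall_mono b) (hall_mono a) \<in> (HS k n :: 'a nc set)" using IH1 that by simp
        then have "- lie (hall_mono b) (hall_mono a) \<in> (HS k n :: 'a nc set)"
          unfolding HS_def by (rule NC.span_neg)
        then show ?thesis by (subst lie_antisym) simp
      qed
    qed
    show ?case
    proof (cases "length h = 1 \<or> k \<le> drop (std_split h) h")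
      case True
      have hm: "hall_mono (h @ k) = (lie (hall_mono h) (hall_mono k) :: 'a nc)"
      proof -
        have "2 \<le> length (h @ k)" using lyndon_len[OF lh] lyndon_len[OF lk] by simp
        then show ?thesis using hall_long[of "h @ k"] std_append[OF lh lk True] by simp
      qed
      have "lyndon (h @ k) \<and> h @ k < k" by (rule lyndon_append[OF lh lk hk])
      then have "hall_mono (h @ k) \<in> (HS k n :: 'a nc set)"
        unfolding HS_def using n by (intro NC.span_base) auto
      then show ?thesis using hm by simp
    next
      case False
      then have len: "2 \<le> length h" and vk: "drop (std_split h) h < k"
        using lyndon_len[OF lh] by auto
      define u where "u = take (std_split h) h"
      define v where "v = drop (std_split h) h"
      have b: "0 < std_split h" "std_split h < length h" using std_split_bounds[OF len] by auto
      have lu: "lyndon u" unfolding u_def by (rule std_left_lyndon[OF lh len])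
      have lv: "lyndon v" unfolding v_def by (rule std_right_lyndon[OF len])
      have uh: "u < h" unfolding u_def using b by (rule take_less)
      have uk: "u < k" using uh hk by simp
      have vk': "v < k" using vk by (simp add: v_def)
      have lenuv: "length u + length v = length h" using b by (simp add: u_def v_def)
      have hm: "hall_mono h = lie (hall_mono u) (hall_mono v)"
        unfolding u_def v_def by (rule hall_long[OF len])
      have lu1: "1 \<le> length u" and lv1: "1 \<le> length v" using lyndon_len lu lv by auto
      have A: "lie (hall_mono v) (hall_mono k) \<in> (HS k (length v + length k) :: 'a nc set)"
        using outer[OF _ refl refl lv lk vk'] n lenuv lu1 by simp
      have B: "lie (hall_mono u) (hall_mono k) \<in> (HS k (length u + length k) :: 'a nc set)"
        using outer[OF _ refl refl lu lk uk] n lenuv lv1 by simp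
      have A': "lie (hall_mono u) (lie (hall_mono v) (hall_mono k)) \<in> (HS k n :: 'a nc set)"
        using A unfolding HS_def
      proof (rule lie_span_right)
        fix g :: "'a nc" assume "g \<in> {hall_mono s | s. lyndon s \<and> s < k \<and> length s \<le> length v + length k}"
        then obtain t where t: "g = hall_mono t" "lyndon t" "t < k" "length t \<le> length v + length k" by auto
        show "lie (hall_mono u) g \<in> NC.span {hall_mono s | s. lyndon s \<and> s < k \<and> length s \<le> n}"
          using IH[OF lu t(2) uk t(3)] t(1,4) n lenuv unfolding HS_def by simp
      qed
      have B': "lie (hall_mono v) (lie (hall_mono u) (hall_mono k)) \<in> (HS k n :: 'a nc set)"
        using B unfolding HS_def
      proof (rule lie_span_right)
        fix g :: "'a nc" assume "g \<in> {hall_mono s | s. lyndon s \<and> s < k \<and> length s \<le> length u + length k}"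
        then obtain t where t: "g = hall_mono t" "lyndon t" "t < k" "length t \<le> length u + length k" by auto
        show "lie (hall_mono v) g \<in> NC.span {hall_mono s | s. lyndon s \<and> s < k \<and> length s \<le> n}"
          using IH[OF lv t(2) vk' t(3)] t(1,4) n lenuv unfolding HS_def by simp
      qed
      have "(lie (hall_mono h) (hall_mono k) :: 'a nc) = lie (hall_mono u) (lie (hall_mono v) (hall_mono k)) - lie (hall_mono v) (lie (hall_mono u) (hall_mono k))"
        unfolding hm by (rule jacobi)
      then show ?thesis using A' B' unfolding HS_def by (simp add: NC.span_diff)
    qed
  qed
qed

lemma hall_bracket:
  assumes "lyndon u" "lyndon v"
  shows "lie (hall_mono u) (hall_mono v) \<in> NC.span (hall_monomials :: 'a::field nc set)"
proof -
  have sub: "HS k n \<subseteq> NC.span (hall_monomials :: 'a nc set)" for k n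
    unfolding HS_def hall_monomials_def by (rule NC.span_mono) auto
  have one: "lie (hall_mono a) (hall_mono b) \<in> NC.span (hall_monomials :: 'a nc set)"
    if "lyndon a" "lyndon b" "a < b" for a b
    using main_aux[OF refl refl that] sub by blast
  consider "u < v" | "u = v" | "v < u" by fastforce
  then show ?thesis
  proof cases
    case 1 then show ?thesis using one assms by simp
  next
    case 2 then show ?thesis by (simp add: NC.span_zero)
  next
    case 3
    then have "- lie (hall_mono v) (hall_mono u) \<in> NC.span (hall_monomials :: 'a nc set)"
      using one assms by (intro NC.span_neg) simp
    then show ?thesis by (subst lie_antisym) simp
  qed
qed

lemma free_lie_span': "p \<in> free_lie \<Longrightarrow> p \<in> NC.span (hall_monomials :: 'a::field nc set)"
proof (induction rule: free_lie.induct)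
  case gen_x
  have "hall_mono [False] = Poly_Mapping.single [False] (1::'a)" by (subst hall_mono.simps) simp
  then show ?case unfolding hall_monomials_def using lyndon_single
    by (intro NC.span_base) (auto intro!: exI[of _ "[False]"])
next
  case gen_y
  have "hall_mono [True] = Poly_Mapping.single [True] (1::'a)" by (subst hall_mono.simps) simp
  then show ?case unfolding hall_monomials_def using lyndon_single
    by (intro NC.span_base) (auto intro!: exI[of _ "[True]"])
next
  case (add p q) show ?case by (rule NC.span_add[OF add.IH])
next
  case (scale p c) show ?case by (rule NC.span_scale[OF scale.IH])
next
  case (bracket p q)
  show ?case using bracket.IH(1)
  proof (rule lie_span_left)
    fix g assume "g \<in> (hall_monomials :: 'a nc set)"
    then obtain u where u: "g = hall_mono u" "lyndon u" unfolding hall_monomials_def by auto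
    show "lie g q \<in> NC.span hall_monomials" using bracket.IH(2)
    proof (rule lie_span_right)
      fix g' assume "g' \<in> (hall_monomials :: 'a nc set)"
      then obtain v where v: "g' = hall_mono v" "lyndon v" unfolding hall_monomials_def by auto
      show "lie g g' \<in> NC.span hall_monomials" using hall_bracket[OF u(2) v(2)] u v by simp
    qed
  qed
qed


theorem proposition3p4:
  fixes p :: "'a::field_char_0 nc" and k :: nat
  assumes "p \<in> free_lie"
  shows "\<exists>S c. finite S \<and> S \<subseteq> hall_monomials \<times> hall_monomials \<and>
    lie p ((delta ^^ k) p) = (\<Sum>(A, B)\<in>S. nc_scale (c A B) (pseudodet k 0 A B))"
proof -
  obtain T a where T: "finite T" "T \<subseteq> hall_monomials" and p: "p = (\<Sum>t\<in>T. nc_scale (a t) t)"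
    using free_lie_span'[OF assms] unfolding NC.span_explicit by blast
  define D where "D = (delta ^^ k :: 'a nc \<Rightarrow> 'a nc)"
  have Dp: "D p = (\<Sum>t\<in>T. nc_scale (a t) (D t))"
    unfolding p D_def by (simp add: deltak_sum deltak_scale)
  have X: "(\<Sum>(A, B)\<in>T \<times> T. nc_scale (a A * a B) (lie (D A) B)) = lie (D p) p"
  proof -
    have "lie (D p) p = (\<Sum>A\<in>T. lie (nc_scale (a A) (D A)) p)" by (simp add: Dp lie_sum_left)
    also have "\<dots> = (\<Sum>A\<in>T. \<Sum>B\<in>T. nc_scale (a A * a B) (lie (D A) B))"
      by (subst p) (simp add: lie_sum_right lie_scale_left lie_scale_right NC.scale_sum_right mult.commute)
    finally show ?thesis by (simp add: sum.cartesian_product)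
  qed
  have Y: "(\<Sum>(A, B)\<in>T \<times> T. nc_scale (a A * a B) (lie A (D B))) = lie p (D p)"
  proof -
    have "lie p (D p) = (\<Sum>A\<in>T. lie (nc_scale (a A) A) (D p))" by (subst (1) p) (simp add: lie_sum_left)
    also have "\<dots> = (\<Sum>A\<in>T. \<Sum>B\<in>T. nc_scale (a A * a B) (lie A (D B)))"
      by (simp add: Dp lie_sum_right lie_scale_left lie_scale_right NC.scale_sum_right mult.commute)
    finally show ?thesis by (simp add: sum.cartesian_product)
  qed
  have "(\<Sum>(A, B)\<in>T \<times> T. nc_scale (- (1/2) * a A * a B) (pseudodet k 0 A B))
      = (\<Sum>(A, B)\<in>T \<times> T. nc_scale (- (1/2)) (nc_scale (a A * a B) (lie (D A) B)) - nc_scale (- (1/2)) (nc_scale (a A * a B) (lie A (D B))))"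
    by (rule sum.cong) (auto simp: pseudodet_def D_def NC.scale_right_diff_distrib mult.assoc)
  also have "\<dots> = nc_scale (- (1/2)) (lie (D p) p) - nc_scale (- (1/2)) (lie p (D p))"
    unfolding X[symmetric] Y[symmetric] by (simp only: split_def sum_subtractf NC.scale_sum_right)
  also have "\<dots> = lie p (D p)"
    by (subst lie_antisym) (simp add: NC.scale_minus_right NC.scale_left_distrib[symmetric])
  finally show ?thesis
    using T by (intro exI[of _ "T \<times> T"] exI[of _ "\<lambda>A B. - (1/2) * a A * a B"]) (auto simp: D_def)
qed

end
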